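(* Let $(\mathfrak{A},\varphi,\tau)$ be a $*$-dynamical system and let $(\mathfrak{G},\pi,\Omega)$ be any cyclic representation of $(\mathfrak{A},\varphi)$. Let $\iota:\mathfrak{A}\to\mathfrak{G}$, $\iota(A)=\pi(A)\Omega$, and let $U_0:\mathfrak{G}\to\mathfrak{G}$ be the (well-defined, linear, norm at most $1$) operator $U_0\iota(A)=\iota(\tau(A))$. Let $U:\mathfrak{H}\to\mathfrak{H}$ be the bounded linear extension of $U_0$ to the completion $\mathfrak{H}$ of $\mathfrak{G}$, and let $P$ be the orthogonal projection of $\mathfrak{H}$ onto the subspace of fixed points of $U$. Then $(\mathfrak{A},\varphi,\tau)$ is ergodic if and only if $P=\Omega\otimes\Omega$, i.e. if and only if the fixed points of $U$ form a one-dimensional subspace of $\mathfrak{H}$.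
   Context: All algebras are over $\mathbb{C}$. A state on a unital $*$-algebra $\mathfrak{A}$ is a linear functional $\varphi$ with $\varphi(A^*A)\ge0$ for all $A$ and $\varphi(1)=1$. A $*$-dynamical system is a triple $(\mathfrak{A},\varphi,\tau)$ with $\mathfrak{A}$ a unital $*$-algebra, $\varphi$ a state, and $\tau:\mathfrak{A}\to\mathfrak{A}$ linear with $\tau(1)=1$ and $\varphi(\tau(A)^*\tau(A))\le\varphi(A^*A)$ for all $A$. Let $\|A\|_\varphi=\sqrt{\varphi(A^*A)}$, and identify $\alpha\in\mathbb{C}$ with $\alpha1$. The system is ergodic if for every sequence $(A_n)$ in $\mathfrak{A}$ with $\|\tau(A_n)-A_n\|_\varphi\to0$ which is Cauchy for $\|\cdot\|_\varphi$ (for every $\varepsilon>0$ there is $N$ with $\|A_m-A_n\|_\varphi\le\varepsilon$ for $m,n>N$), there is $\alpha\in\mathbb{C}$ with $\|A_n-\alpha\|_\varphi\to0$. A cyclic representation of $(\mathfrak{A},\varphi)$ is a triple $(\mathfrak{G},\pi,\Omega)$ with $\mathfrak{G}$ an inner product space, $\pi:\mathfrak{A}\to L(\mathfrak{G})$ (linear operators on $\mathfrak{G}$) linear with $\pi(1)=1$ and $\pi(AB)=\pi(A)\pi(B)$, $\Omega\in\mathfrak{G}$, $\pi(\mathfrak{A})\Omega=\mathfrak{G}$, and $\langle\pi(A)\Omega,\pi(B)\Omega\rangle=\varphi(A^*B)$ for all $A,B$. Inner products are linear in the second argument; for $x,y\in\mathfrak{H}$, $x\otimes y$ denotes the operator $z\mapsto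 x\langle y,z\rangle$. *)

theory Defs
  imports Complex_Main "HOL-Library.Complex_Order"
begin

definition star_algebra :: "(complex \<Rightarrow> 'a::ring_1 \<Rightarrow> 'a) \<Rightarrow> ('a \<Rightarrow> 'a) \<Rightarrow> bool" where
  "star_algebra sm st \<longleftrightarrow>
     vector_space sm \<and>
     (\<forall>c x y. sm c (x * y) = sm c x * y \<and> sm c (x * y) = x * sm c y) \<and>
     (\<forall>x. st (st x) = x) \<and>
     (\<forall>x y. st (x + y) = st x + st y) \<and>
     (\<forall>c x. st (sm c x) = sm (cnj c) (st x)) \<and>
     (\<forall>x y. st (x * y) = st y * st x)"

definition is_state :: "(complex \<Rightarrow> 'a::ring_1 \<Rightarrow> 'a) \<Rightarrow> ('a \<Rightarrow> 'a) \<Rightarrow> ('a \<Rightarrow> complex) \<Rightarrow> bool" where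
  "is_state sm st \<phi> \<longleftrightarrow>
     (\<forall>x y. \<phi> (x + y) = \<phi> x + \<phi> y) \<and> (\<forall>c x. \<phi> (sm c x) = c * \<phi> x) \<and>
     (\<forall>A. 0 \<le> \<phi> (st A * A)) \<and> \<phi> 1 = 1"

definition star_dyn_system ::
  "(complex \<Rightarrow> 'a::ring_1 \<Rightarrow> 'a) \<Rightarrow> ('a \<Rightarrow> 'a) \<Rightarrow> ('a \<Rightarrow> complex) \<Rightarrow> ('a \<Rightarrow> 'a) \<Rightarrow> bool" where
  "star_dyn_system sm st \<phi> \<tau> \<longleftrightarrow>
     star_algebra sm st \<and> is_state sm st \<phi> \<and>
     (\<forall>x y. \<tau> (x + y) = \<tau> x + \<tau> y) \<and> (\<forall>c x. \<tau> (sm c x) = sm c (\<tau> x)) \<and>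
     \<tau> 1 = 1 \<and>
     (\<forall>A. \<phi> (st (\<tau> A) * \<tau> A) \<le> \<phi> (st A * A))"

definition phi_norm :: "('a::ring_1 \<Rightarrow> 'a) \<Rightarrow> ('a \<Rightarrow> complex) \<Rightarrow> 'a \<Rightarrow> real" where
  "phi_norm st \<phi> A = sqrt (Re (\<phi> (st A * A)))"

definition ergodic ::
  "(complex \<Rightarrow> 'a::ring_1 \<Rightarrow> 'a) \<Rightarrow> ('a \<Rightarrow> 'a) \<Rightarrow> ('a \<Rightarrow> complex) \<Rightarrow> ('a \<Rightarrow> 'a) \<Rightarrow> bool" where
  "ergodic sm st \<phi> \<tau> \<longleftrightarrow>
     (\<forall>An :: nat \<Rightarrow> 'a.
        ((\<lambda>n. phi_norm st \<phi> (\<tau> (An n) - An n)) \<longlonglongrightarrow> 0) \<and>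
        (\<forall>\<epsilon>>0. \<exists>N. \<forall>m n. m > N \<and> n > N \<longrightarrow> phi_norm st \<phi> (An m - An n) \<le> \<epsilon>)
        \<longrightarrow> (\<exists>\<alpha>::complex. (\<lambda>n. phi_norm st \<phi> (An n - sm \<alpha> 1)) \<longlonglongrightarrow> 0))"

text \<open>A complex inner product space structure on the type 'h (inner product linear in
  the second argument).\<close>
definition cinner_space :: "(complex \<Rightarrow> 'h::ab_group_add \<Rightarrow> 'h) \<Rightarrow> ('h \<Rightarrow> 'h \<Rightarrow> complex) \<Rightarrow> bool" where
  "cinner_space sm ip \<longleftrightarrow>
     vector_space sm \<and>
     (\<forall>x y z. ip x (y + z) = ip x y + ip x z) \<and>
     (\<forall>c x y. ip x (sm c y) = c * ip x y) \<and>
     (\<forall>x y. ip y x = cnj (ip x y)) \<and>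
     (\<forall>x. 0 \<le> ip x x) \<and>
     (\<forall>x. ip x x = 0 \<longrightarrow> x = 0)"

definition inorm :: "('h \<Rightarrow> 'h \<Rightarrow> complex) \<Rightarrow> 'h \<Rightarrow> real" where
  "inorm ip x = sqrt (Re (ip x x))"

definition icomplete :: "('h::ab_group_add \<Rightarrow> 'h \<Rightarrow> complex) \<Rightarrow> bool" where
  "icomplete ip \<longleftrightarrow>
     (\<forall>x :: nat \<Rightarrow> 'h. (\<forall>\<epsilon>>0. \<exists>N. \<forall>m n. m > N \<and> n > N \<longrightarrow> inorm ip (x m - x n) \<le> \<epsilon>)
        \<longrightarrow> (\<exists>l. (\<lambda>n. inorm ip (x n - l)) \<longlonglongrightarrow> 0))"

definition is_completion_of ::
  "(complex \<Rightarrow> 'h::ab_group_add \<Rightarrow> 'h) \<Rightarrow> ('h \<Rightarrow> 'h \<Rightarrow> complex) \<Rightarrow> 'h set \<Rightarrow> bool" where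
  "is_completion_of sm ip G \<longleftrightarrow>
     cinner_space sm ip \<and> 0 \<in> G \<and>
     (\<forall>x\<in>G. \<forall>y\<in>G. x + y \<in> G) \<and> (\<forall>c. \<forall>x\<in>G. sm c x \<in> G) \<and>
     icomplete ip \<and>
     (\<forall>x. \<forall>\<epsilon>>0. \<exists>g\<in>G. inorm ip (x - g) < \<epsilon>)"

text \<open>Cyclic representation (G, \<pi>, \<Omega>) of (A, \<phi>) on the inner product space G (a subspace of
  'h carrying the restricted inner product); each \<pi> A is a linear operator on G.\<close>
definition cyclic_rep ::
  "(complex \<Rightarrow> 'a::ring_1 \<Rightarrow> 'a) \<Rightarrow> ('a \<Rightarrow> 'a) \<Rightarrow> ('a \<Rightarrow> complex) \<Rightarrow>
   (complex \<Rightarrow> 'h::ab_group_add \<Rightarrow> 'h) \<Rightarrow> ('h \<Rightarrow> 'h \<Rightarrow> complex) \<Rightarrow>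
   'h set \<Rightarrow> ('a \<Rightarrow> 'h \<Rightarrow> 'h) \<Rightarrow> 'h \<Rightarrow> bool" where
  "cyclic_rep smA st \<phi> smH ip G \<pi> \<Omega> \<longleftrightarrow>
     (\<forall>A. \<forall>x\<in>G. \<pi> A x \<in> G) \<and>
     (\<forall>A. \<forall>x\<in>G. \<forall>y\<in>G. \<pi> A (x + y) = \<pi> A x + \<pi> A y) \<and>
     (\<forall>A c. \<forall>x\<in>G. \<pi> A (smH c x) = smH c (\<pi> A x)) \<and>
     (\<forall>A B. \<forall>x\<in>G. \<pi> (A + B) x = \<pi> A x + \<pi> B x) \<and>
     (\<forall>A c. \<forall>x\<in>G. \<pi> (smA c A) x = smH c (\<pi> A x)) \<and>
     (\<forall>x\<in>G. \<pi> 1 x = x) \<and>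
     (\<forall>A B. \<forall>x\<in>G. \<pi> (A * B) x = \<pi> A (\<pi> B x)) \<and>
     \<Omega> \<in> G \<and>
     G = (\<lambda>A. \<pi> A \<Omega>) ` UNIV \<and>
     (\<forall>A B. ip (\<pi> A \<Omega>) (\<pi> B \<Omega>) = \<phi> (st A * B))"

end

theory Submission imports Defs begin

lemma sq_null:
  fixes f g :: "nat \<Rightarrow> real"
  assumes "\<And>n. 0 \<le> f n" "\<And>n. f n \<le> g n" "g \<longlonglongrightarrow> 0"
  shows "f \<longlonglongrightarrow> 0"
  by (rule tendsto_sandwich[of "\<lambda>_. 0" f sequentially g]) (use assms in auto)

lemma sqrt_null:
  fixes f :: "nat \<Rightarrow> real"
  assumes "\<And>n. 0 \<le> f n"
  shows "((\<lambda>n. sqrt (f n)) \<longlonglongrightarrow> 0) \<longleftrightarrow> (f \<longlonglongrightarrow> 0)"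
proof
  assume "(\<lambda>n. sqrt (f n)) \<longlonglongrightarrow> 0"
  from tendsto_power[OF this, of 2] show "f \<longlonglongrightarrow> 0" using assms by simp
next
  assume "f \<longlonglongrightarrow> 0"
  from tendsto_real_sqrt[OF this] show "(\<lambda>n. sqrt (f n)) \<longlonglongrightarrow> 0" by simp
qed

locale cip =
  fixes sm :: "complex \<Rightarrow> 'h::ab_group_add \<Rightarrow> 'h" and ip :: "'h \<Rightarrow> 'h \<Rightarrow> complex"
  assumes cs: "cinner_space sm ip"
begin

definition Q where "Q x = Re (ip x x)"

lemma add2: "ip x (y + z) = ip x y + ip x z" using cs unfolding cinner_space_def by blast
lemma smul2: "ip x (sm c y) = c * ip x y" using cs unfolding cinner_space_def by blast
lemma sym: "ip y x = cnj (ip x y)" using cs unfolding cinner_space_def by blast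
lemma pos: "0 \<le> ip x x" using cs unfolding cinner_space_def by blast
lemma def0: "ip x x = 0 \<Longrightarrow> x = 0" using cs unfolding cinner_space_def by blast

lemma zero2: "ip x 0 = 0" using add2[of x 0 0] by simp
lemma neg2: "ip x (- y) = - ip x y" using add2[of x y "-y"] zero2 by (simp add: add_eq_0_iff2)
lemma diff2: "ip x (y - z) = ip x y - ip x z" using add2[of x y "-z"] neg2 by simp
lemma add1: "ip (y + z) x = ip y x + ip z x" using sym[of "y+z" x] sym[of y x] sym[of z x] add2 by simp
lemma neg1: "ip (- y) x = - ip y x" using sym[of "-y" x] sym[of y x] neg2 by simp
lemma diff1: "ip (y - z) x = ip y x - ip z x" using add1[of y "-z"] neg1 by simp

lemma ipQ: "ip x x = complex_of_real (Q x)"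
  using pos[of x] unfolding Q_def by (simp add: complex_eq_iff less_eq_complex_def)
lemma Q_nonneg: "0 \<le> Q x" using pos[of x] unfolding Q_def by (simp add: less_eq_complex_def)
lemma Q0: "Q x = 0 \<Longrightarrow> x = 0" using ipQ def0 by simp
lemma Q_zero[simp]: "Q 0 = 0" unfolding Q_def using zero2 by simp
lemma inorm_Q: "inorm ip x = sqrt (Q x)" unfolding inorm_def Q_def ..
lemma Q_neg: "Q (- x) = Q x" unfolding Q_def using neg1 neg2 by simp
lemma Q_commute: "Q (x - y) = Q (y - x)" using Q_neg[of "x - y"] by simp

lemma parallelogram: "Q (a + b) + Q (a - b) = 2 * Q a + 2 * Q b"
proof -
  have "ip (a+b) (a+b) + ip (a-b) (a-b) = 2 * ip a a + 2 * ip b b"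
    by (simp add: add1 add2 diff1 diff2 algebra_simps)
  then show ?thesis unfolding Q_def by (metis plus_complex.sel times_complex.sel Re_complex_of_real
     mult_2 mult_2_right)
qed

lemma Q_add: "Q (a + b) \<le> 2 * Q a + 2 * Q b"
  using parallelogram[of a b] Q_nonneg[of "a - b"] by linarith

lemma Q_tri: "Q (a - c) \<le> 2 * Q (a - b) + 2 * Q (b - c)"
  using Q_add[of "a - b" "b - c"] by simp


lemma lim_unique:
  assumes "(\<lambda>n. Q (x n - a)) \<longlonglongrightarrow> 0" "(\<lambda>n. Q (x n - b)) \<longlonglongrightarrow> 0"
  shows "a = b"
proof -
  have g: "(\<lambda>n. 2 * Q (x n - a) + 2 * Q (x n - b)) \<longlonglongrightarrow> 0"
    using tendsto_add[OF tendsto_mult[OF tendsto_const assms(1)] tendsto_mult[OF tendsto_const assms(2)], of 2 2] by simp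
  have le: "Q (a - b) \<le> 2 * Q (x n - a) + 2 * Q (x n - b)" for n
    using Q_tri[of a b "x n"] Q_commute[of a "x n"] by linarith
  have "(\<lambda>n. Q (a - b)) \<longlonglongrightarrow> 0"
    by (rule sq_null[OF Q_nonneg le g])
  then have "Q (a - b) = 0" by (rule LIMSEQ_const_iff[THEN iffD1])
  then show ?thesis using Q0[of "a - b"] by simp
qed


lemma conv_cauchy:
  assumes "(\<lambda>n. Q (x n - l)) \<longlonglongrightarrow> 0"
  shows "\<forall>\<epsilon>>0. \<exists>N. \<forall>m n. m > N \<and> n > N \<longrightarrow> inorm ip (x m - x n) \<le> \<epsilon>"
proof (intro allI impI)
  fix e :: real assume e: "e > 0"
  then have e4: "e^2/4 > 0" by simp
  from LIMSEQ_D[OF assms e4] obtain N where N0: "\<And>n. n \<ge> N \<Longrightarrow> norm (Q (x n - l) - 0) < e^2/4"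
    by blast
  have N: "Q (x n - l) < e^2/4" if "n \<ge> N" for n using N0[OF that] by simp
  show "\<exists>N. \<forall>m n. m > N \<and> n > N \<longrightarrow> inorm ip (x m - x n) \<le> e"
  proof (intro exI allI impI)
    fix m n assume mn: "m > N \<and> n > N"
    then have 1: "Q (x m - l) < e^2/4" "Q (x n - l) < e^2/4" using N by auto
    have 2: "Q (x m - x n) \<le> 2 * Q (x m - l) + 2 * Q (l - x n)" by (rule Q_tri)
    have 3: "Q (l - x n) = Q (x n - l)" by (rule Q_commute)
    from 1 2 3 have "Q (x m - x n) \<le> e^2" by linarith
    then have "sqrt (Q (x m - x n)) \<le> sqrt (e^2)" by (rule real_sqrt_le_mono)
    then show "inorm ip (x m - x n) \<le> e" using e by (simp add: inorm_Q)
  qed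
qed

end

theorem proposition2p4:
  fixes smA :: "complex \<Rightarrow> 'a::ring_1 \<Rightarrow> 'a"
    and st :: "'a \<Rightarrow> 'a"
    and \<phi> :: "'a \<Rightarrow> complex"
    and \<tau> :: "'a \<Rightarrow> 'a"
    and smH :: "complex \<Rightarrow> 'h::ab_group_add \<Rightarrow> 'h"
    and ip :: "'h \<Rightarrow> 'h \<Rightarrow> complex"
    and G :: "'h set"
    and \<pi> :: "'a \<Rightarrow> 'h \<Rightarrow> 'h"
    and \<Omega> :: 'h
    and U P :: "'h \<Rightarrow> 'h"
  assumes sys: "star_dyn_system smA st \<phi> \<tau>"
    and compl: "is_completion_of smH ip G"
    and rep: "cyclic_rep smA st \<phi> smH ip G \<pi> \<Omega>"
    and U_add: "\<forall>x y. U (x + y) = U x + U y"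
    and U_hom: "\<forall>c x. U (smH c x) = smH c (U x)"
    and U_bdd: "\<exists>C. \<forall>x. inorm ip (U x) \<le> C * inorm ip x"
    and U_ext: "\<forall>A. U (\<pi> A \<Omega>) = \<pi> (\<tau> A) \<Omega>"
    and P_range: "\<forall>x. U (P x) = P x"
    and P_orth: "\<forall>x y. U y = y \<longrightarrow> ip y (x - P x) = 0"
  shows "ergodic smA st \<phi> \<tau> \<longleftrightarrow> (\<forall>x. P x = smH (ip \<Omega> x) \<Omega>)"
proof -
  interpret cip smH ip using compl unfolding is_completion_of_def cip_def by blast
  have icomp: "icomplete ip" using compl unfolding is_completion_of_def by blast
  have dense: "\<forall>x. \<forall>\<epsilon>>0. \<exists>g\<in>G. inorm ip (x - g) < \<epsilon>" using compl unfolding is_completion_of_def by blast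
  have OmG: "\<Omega> \<in> G" and Grange: "G = (\<lambda>A. \<pi> A \<Omega>) ` UNIV" using rep unfolding cyclic_rep_def by blast+
  have pi_add: "\<pi> (A + B) \<Omega> = \<pi> A \<Omega> + \<pi> B \<Omega>" for A B using rep OmG unfolding cyclic_rep_def by blast
  have pi_diff: "\<pi> (A - B) \<Omega> = \<pi> A \<Omega> - \<pi> B \<Omega>" for A B
    using pi_add[of "A - B" B] by (simp add: eq_diff_eq)
  have pi_one: "\<pi> 1 \<Omega> = \<Omega>" using rep OmG unfolding cyclic_rep_def by blast
  have pi_sm: "\<pi> (smA c A) \<Omega> = smH c (\<pi> A \<Omega>)" for c A using rep OmG unfolding cyclic_rep_def by blast
  have ip_pi: "ip (\<pi> A \<Omega>) (\<pi> B \<Omega>) = \<phi> (st A * B)" for A B using rep unfolding cyclic_rep_def by blast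
  have pn: "phi_norm st \<phi> A = inorm ip (\<pi> A \<Omega>)" for A
    unfolding phi_norm_def inorm_def using ip_pi by simp
  have tau1: "\<tau> 1 = 1" using sys unfolding star_dyn_system_def by blast
  have phi1: "\<phi> 1 = 1" using sys unfolding star_dyn_system_def is_state_def by blast
  have stst: "st (st x) = x" and stmul: "st (x * y) = st y * st x" for x y
    using sys unfolding star_dyn_system_def star_algebra_def by blast+
  have st1: "st 1 = 1"
  proof -
    have "st 1 = st 1 * st (st 1)" by (simp add: stst)
    also have "\<dots> = st (st 1 * 1)" by (rule stmul[of "st 1" 1, symmetric])
    also have "\<dots> = 1" by (simp add: stst)
    finally show ?thesis .
  qed
  have UO: "U \<Omega> = \<Omega>" using U_ext[rule_format, of 1] tau1 pi_one by simp
  have OO: "ip \<Omega> \<Omega> = 1" using ip_pi[of 1 1] pi_one st1 phi1 by simp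
  have U_diff: "U (x - y) = U x - U y" for x y
    using U_add[rule_format, of "x - y" y] by (simp add: eq_diff_eq)
  obtain C where C: "\<And>x. inorm ip (U x) \<le> C * inorm ip x" using U_bdd by blast
  have QU: "Q (U x) \<le> C^2 * Q x" for x
  proof -
    have "sqrt (Q (U x)) \<le> C * sqrt (Q x)" using C[of x] by (simp add: inorm_Q)
    then have "(sqrt (Q (U x)))^2 \<le> (C * sqrt (Q x))^2" by (rule power_mono) (simp add: Q_nonneg)
    then show ?thesis using Q_nonneg[of "U x"] Q_nonneg[of x] by (simp add: power_mult_distrib)
  qed
  have fixP: "P x = x" if "U x = x" for x
  proof -
    have "U (x - P x) = x - P x" using U_diff that P_range by simp
    then have "ip (x - P x) (x - P x) = 0" using P_orth by blast
    then show ?thesis using def0[of "x - P x"] by simp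
  qed
  have Ulim: "(\<lambda>n. Q (U (x n) - U l)) \<longlonglongrightarrow> 0" if "(\<lambda>n. Q (x n - l)) \<longlonglongrightarrow> 0" for x l
  proof (rule sq_null[OF Q_nonneg])
    show "Q (U (x n) - U l) \<le> C^2 * Q (x n - l)" for n using QU[of "x n - l"] U_diff by simp
    show "(\<lambda>n. C^2 * Q (x n - l)) \<longlonglongrightarrow> 0" using tendsto_mult[OF tendsto_const that, of "C^2"] by simp
  qed
  show ?thesis
  proof
    assume erg: "ergodic smA st \<phi> \<tau>"
    have fix_mult: "y = smH (ip \<Omega> y) \<Omega>" if Uy: "U y = y" for y
    proof -
      have "\<exists>A. inorm ip (y - \<pi> A \<Omega>) < inverse (real (Suc n))" for n
      proof -
        have "inverse (real (Suc n)) > 0" by simp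
        then obtain g where "g \<in> G" "inorm ip (y - g) < inverse (real (Suc n))" using dense by blast
        then show ?thesis using Grange by blast
      qed
      then obtain An where An: "\<And>n. inorm ip (y - \<pi> (An n) \<Omega>) < inverse (real (Suc n))" by metis
      define g where "g n = \<pi> (An n) \<Omega>" for n
      have gQ: "Q (g n - y) \<le> (inverse (real (Suc n)))^2" for n
      proof -
        have "sqrt (Q (y - g n)) \<le> inverse (real (Suc n))" using An[of n] by (simp add: inorm_Q g_def)
        then have "(sqrt (Q (y - g n)))^2 \<le> (inverse (real (Suc n)))^2" by (rule power_mono) (simp add: Q_nonneg)
        then show ?thesis using Q_nonneg[of "y - g n"] Q_commute[of y "g n"] by simp
      qed
      have gy: "(\<lambda>n. Q (g n - y)) \<longlonglongrightarrow> 0"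
      proof (rule sq_null[OF Q_nonneg gQ])
        show "(\<lambda>n. (inverse (real (Suc n)))^2) \<longlonglongrightarrow> 0"
          using tendsto_power[OF LIMSEQ_inverse_real_of_nat, of 2] by simp
      qed
      have cau: "\<forall>\<epsilon>>0. \<exists>N. \<forall>m n. m > N \<and> n > N \<longrightarrow> phi_norm st \<phi> (An m - An n) \<le> \<epsilon>"
        using conv_cauchy[OF gy] by (simp add: pn pi_diff g_def)
      have tQ: "(\<lambda>n. Q (U (g n) - g n)) \<longlonglongrightarrow> 0"
      proof (rule sq_null[OF Q_nonneg])
        have U1: "(\<lambda>n. Q (U (g n) - U y)) \<longlonglongrightarrow> 0" by (rule Ulim[OF gy])
        show "Q (U (g n) - g n) \<le> 2 * Q (U (g n) - U y) + 2 * Q (g n - y)" for n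
          using Q_tri[of "U (g n)" "g n" y] Q_commute[of y "g n"] Uy by simp
        show "(\<lambda>n. 2 * Q (U (g n) - U y) + 2 * Q (g n - y)) \<longlonglongrightarrow> 0"
          using tendsto_add[OF tendsto_mult[OF tendsto_const U1] tendsto_mult[OF tendsto_const gy], of 2 2] by simp
      qed
      have tcond: "(\<lambda>n. phi_norm st \<phi> (\<tau> (An n) - An n)) \<longlonglongrightarrow> 0"
      proof -
        have "phi_norm st \<phi> (\<tau> (An n) - An n) = sqrt (Q (U (g n) - g n))" for n
          by (simp add: pn pi_diff g_def inorm_Q U_ext)
        then show ?thesis using sqrt_null[of "\<lambda>n. Q (U (g n) - g n)"] tQ Q_nonneg by simp
      qed
      obtain \<alpha> where al: "(\<lambda>n. phi_norm st \<phi> (An n - smA \<alpha> 1)) \<longlonglongrightarrow> 0"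
        using erg tcond cau unfolding ergodic_def by blast
      have "phi_norm st \<phi> (An n - smA \<alpha> 1) = sqrt (Q (g n - smH \<alpha> \<Omega>))" for n
        by (simp add: pn pi_diff g_def inorm_Q pi_sm pi_one)
      then have "(\<lambda>n. Q (g n - smH \<alpha> \<Omega>)) \<longlonglongrightarrow> 0"
        using sqrt_null[of "\<lambda>n. Q (g n - smH \<alpha> \<Omega>)"] al Q_nonneg by simp
      then have yeq: "y = smH \<alpha> \<Omega>" using lim_unique[OF gy] by blast
      then have "ip \<Omega> y = \<alpha>" using smul2 OO by simp
      then show ?thesis using yeq by simp
    qed
    show "\<forall>x. P x = smH (ip \<Omega> x) \<Omega>"
    proof
      fix x
      have 1: "P x = smH (ip \<Omega> (P x)) \<Omega>" using fix_mult P_range by blast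
      have "ip \<Omega> (x - P x) = 0" using P_orth UO by blast
      then have "ip \<Omega> x = ip \<Omega> (P x)" by (simp add: diff2)
      then show "P x = smH (ip \<Omega> x) \<Omega>" using 1 by simp
    qed
  next
    assume Pf: "\<forall>x. P x = smH (ip \<Omega> x) \<Omega>"
    show "ergodic smA st \<phi> \<tau>" unfolding ergodic_def
    proof (intro allI impI, elim conjE)
      fix An :: "nat \<Rightarrow> 'a"
      assume t: "(\<lambda>n. phi_norm st \<phi> (\<tau> (An n) - An n)) \<longlonglongrightarrow> 0"
        and cau: "\<forall>\<epsilon>>0. \<exists>N. \<forall>m n. m > N \<and> n > N \<longrightarrow> phi_norm st \<phi> (An m - An n) \<le> \<epsilon>"
      define x where "x n = \<pi> (An n) \<Omega>" for n
      have "\<forall>\<epsilon>>0. \<exists>N. \<forall>m n. m > N \<and> n > N \<longrightarrow> inorm ip (x m - x n) \<le> \<epsilon>"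
        using cau by (simp add: pn pi_diff x_def)
      then obtain l where l0: "(\<lambda>n. inorm ip (x n - l)) \<longlonglongrightarrow> 0" using icomp unfolding icomplete_def by blast
      have xl: "(\<lambda>n. Q (x n - l)) \<longlonglongrightarrow> 0"
        using l0 sqrt_null[of "\<lambda>n. Q (x n - l)"] Q_nonneg by (simp add: inorm_Q)
      have "phi_norm st \<phi> (\<tau> (An n) - An n) = sqrt (Q (U (x n) - x n))" for n
        by (simp add: pn pi_diff x_def inorm_Q U_ext)
      then have tQ: "(\<lambda>n. Q (U (x n) - x n)) \<longlonglongrightarrow> 0"
        using sqrt_null[of "\<lambda>n. Q (U (x n) - x n)"] t Q_nonneg by simp
      have Uxl: "(\<lambda>n. Q (U (x n) - l)) \<longlonglongrightarrow> 0"
      proof (rule sq_null[OF Q_nonneg])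
        show "Q (U (x n) - l) \<le> 2 * Q (U (x n) - x n) + 2 * Q (x n - l)" for n
          by (rule Q_tri)
        show "(\<lambda>n. 2 * Q (U (x n) - x n) + 2 * Q (x n - l)) \<longlonglongrightarrow> 0"
          using tendsto_add[OF tendsto_mult[OF tendsto_const tQ] tendsto_mult[OF tendsto_const xl], of 2 2] by simp
      qed
      have "l = U l" using lim_unique[OF Uxl Ulim[OF xl]] .
      then have "P l = l" using fixP by simp
      then have leq: "l = smH (ip \<Omega> l) \<Omega>" using Pf by metis
      show "\<exists>\<alpha>. (\<lambda>n. phi_norm st \<phi> (An n - smA \<alpha> 1)) \<longlonglongrightarrow> 0"
      proof (intro exI)
        have "phi_norm st \<phi> (An n - smA (ip \<Omega> l) 1) = inorm ip (x n - l)" for n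
          using leq by (simp add: pn pi_diff x_def pi_sm pi_one)
        then show "(\<lambda>n. phi_norm st \<phi> (An n - smA (ip \<Omega> l) 1)) \<longlonglongrightarrow> 0" using l0 by simp
      qed
    qed
  qed
qed

end
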